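(* Fix $p\ge1$, $v\in\mathbb{R}^p$ and a $p\times p$ matrix $Q$ that is positive definite or zero. Let $\{(X_i,Y_i)\}_{i=1}^\infty$ be random pairs with $X_i\in\mathbb{R}^p$, $Y_i\in\{0,1\}$ satisfying (A1) they are i.i.d. with $Y_i\mid X_i\sim\mathrm{Bernoulli}(G(X_i))$ for some measurable $G:\mathbb{R}^p\to(0,1)$; (A2) $\mathbb{E}X_1X_1^T$ is finite and positive definite; (A3) for every open orthant $S_j$ of $\mathbb{R}^p$ ($j=1,\dots,2^p$) and every $\beta\ne0$, $\mathbb{P}\big((1_{S_j}(X_1)+1_{S_j}(-X_1))X_1^T\beta\ne0\big)>0$. Then, almost surely, the posterior distribution based on $\{(X_i,Y_i)\}_{i=1}^n$ is proper for all sufficiently large $n$.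
   Context: The posterior based on $\{(X_i,Y_i)\}_{i=1}^n$ is the (possibly improper) density $\pi(\beta)\propto\prod_{i=1}^n\Phi(X_i^T\beta)^{Y_i}(1-\Phi(X_i^T\beta))^{1-Y_i}\exp\{-\frac12(\beta-v)^TQ(\beta-v)\}$ on $\mathbb{R}^p$, with $\Phi$ the standard normal cdf; it is proper if the right-hand side is integrable over $\mathbb{R}^p$. *)

theory Defs
  imports "HOL-Probability.Probability"
begin

definition Phi :: "real \<Rightarrow> real" where
  "Phi t = (\<integral>x. indicator {..t} x * std_normal_density x \<partial>lborel)"

definition pos_def :: "real^'p^'p \<Rightarrow> bool" where
  "pos_def A \<longleftrightarrow> transpose A = A \<and> (\<forall>x. x \<noteq> 0 \<longrightarrow> x \<bullet> (A *v x) > 0)"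

definition sign_vector :: "real^'p \<Rightarrow> bool" where
  "sign_vector s \<longleftrightarrow> (\<forall>k. s $ k = 1 \<or> s $ k = -1)"

definition open_orthant :: "real^'p \<Rightarrow> (real^'p) set" where
  "open_orthant s = {x. \<forall>k. s $ k * x $ k > 0}"

text \<open>Unnormalized posterior density based on the first n observations
  (indices 0..n-1, corresponding to 1..n in the paper).\<close>
definition posterior_dens ::
  "(nat \<Rightarrow> real^'p) \<Rightarrow> (nat \<Rightarrow> real) \<Rightarrow> real^'p \<Rightarrow> real^'p^'p \<Rightarrow> nat \<Rightarrow> real^'p \<Rightarrow> real" where
  "posterior_dens x y v Q n \<beta> =
     (\<Prod>i<n. Phi (x i \<bullet> \<beta>) ^ nat \<lfloor>y i\<rfloor> * (1 - Phi (x i \<bullet> \<beta>)) ^ nat \<lfloor>1 - y i\<rfloor>)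
     * exp (- (1/2) * ((\<beta> - v) \<bullet> (Q *v (\<beta> - v))))"

definition posterior_proper ::
  "(nat \<Rightarrow> real^'p) \<Rightarrow> (nat \<Rightarrow> real) \<Rightarrow> real^'p \<Rightarrow> real^'p^'p \<Rightarrow> nat \<Rightarrow> bool" where
  "posterior_proper x y v Q n \<longleftrightarrow> integrable lborel (posterior_dens x y v Q n)"

end

theory Submission
  imports Defs
begin

lemma integrable_std_ind: "integrable lborel (\<lambda>x. indicator A x * std_normal_density x)" if "A \<in> sets borel"
proof -
  have "integrable lborel (\<lambda>x. std_normal_density x * indicator A x)"
    by (rule integrable_real_mult_indicator) (use that in auto)
  then show ?thesis by (simp add: mult.commute)
qed

lemma Phi_mono: "mono Phi"
  unfolding mono_def Phi_def
  by (intro allI impI integral_mono integrable_std_ind)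
     (auto simp: indicator_def normal_density_nonneg)

lemma Phi_meas[measurable]: "Phi \<in> borel_measurable borel"
  by (rule borel_measurable_mono[OF Phi_mono])

lemma Phi_nonneg: "0 \<le> Phi t"
  unfolding Phi_def by (intro Bochner_Integration.integral_nonneg) (auto simp: normal_density_nonneg)

lemma one_minus_Phi: "1 - Phi t = (\<integral>x. indicator {t<..} x * std_normal_density x \<partial>lborel)"
proof -
  have "(\<integral>x. std_normal_density x \<partial>lborel) = Phi t + (\<integral>x. indicator {t<..} x * std_normal_density x \<partial>lborel)"
  proof -
    have "Phi t + (\<integral>x. indicator {t<..} x * std_normal_density x \<partial>lborel)
      = (\<integral>x. indicator {..t} x * std_normal_density x + indicator {t<..} x * std_normal_density x \<partial>lborel)"
      unfolding Phi_def
      by (rule Bochner_Integration.integral_add[symmetric]) (auto intro!: integrable_std_ind)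
    also have "\<dots> = (\<integral>x. std_normal_density x \<partial>lborel)"
      by (rule Bochner_Integration.integral_cong) (auto simp: indicator_def)
    finally show ?thesis by simp
  qed
  then show ?thesis by simp
qed

lemma Phi_le1: "Phi t \<le> 1"
proof -
  have "0 \<le> 1 - Phi t" unfolding one_minus_Phi
    by (intro Bochner_Integration.integral_nonneg) (auto simp: normal_density_nonneg)
  then show ?thesis by simp
qed

definition Kmom :: "nat \<Rightarrow> real" where
  "Kmom m = (\<integral>x. std_normal_density x * x ^ (2*m) \<partial>lborel)"

lemma integrable_mom: "integrable lborel (\<lambda>x. std_normal_density x * x ^ (2*m))"
  using integrable_normal_moment[of 1 0 "2*m"] by simp

lemma Kmom_nonneg: "0 \<le> Kmom m"
  unfolding Kmom_def by (intro Bochner_Integration.integral_nonneg) (auto simp: normal_density_nonneg)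

lemma tail_bound:
  assumes "t \<noteq> 0" and A: "A \<in> sets borel" and AA: "\<And>x. x \<in> A \<Longrightarrow> \<bar>t\<bar> \<le> \<bar>x\<bar>"
  shows "(\<integral>x. indicator A x * std_normal_density x \<partial>lborel) \<le> Kmom m / t ^ (2*m)"
proof -
  have ev: "\<And>z::real. z ^ (2*m) = \<bar>z\<bar> ^ (2*m)"
    by (simp add: power_even_abs)
  have tp: "0 < t ^ (2*m)" using assms(1) by (subst ev) simp
  have "(\<integral>x. indicator A x * std_normal_density x \<partial>lborel) \<le> (\<integral>x. std_normal_density x * x ^ (2*m) / t ^ (2*m) \<partial>lborel)"
  proof (intro integral_mono integrable_std_ind A integrable_divide integrable_mom)
    fix x
    have d: "0 \<le> std_normal_density x" by (rule normal_density_nonneg)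
    show "indicator A x * std_normal_density x \<le> std_normal_density x * x ^ (2 * m) / t ^ (2 * m)"
    proof (cases "x \<in> A")
      case True
      have "\<bar>t\<bar> ^ (2*m) \<le> \<bar>x\<bar> ^ (2*m)" using AA[OF True] by (intro power_mono) auto
      then have "t ^ (2*m) \<le> x ^ (2*m)" using ev by metis
      then have "1 \<le> x ^ (2*m) / t ^ (2*m)" using tp by simp
      then have "std_normal_density x * 1 \<le> std_normal_density x * (x ^ (2*m) / t ^ (2*m))"
        using d by (intro mult_left_mono) auto
      then show ?thesis using True by simp
    next
      case False
      have "0 \<le> x ^ (2*m)" by (subst ev) simp
      then show ?thesis using False d tp by simp
    qed
  qed
  also have "\<dots> = Kmom m / t ^ (2*m)" unfolding Kmom_def by simp
  finally show ?thesis .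
qed

lemma integrable_cauchy: "integrable lborel (\<lambda>x::real. inverse (1 + x^2))"
  using integrable_inverse_1_plus_square
  by (simp add: set_integrable_def einterval_def)

lemma integrable_prod_cauchy:
  "integrable lborel (\<lambda>\<beta>::'a::euclidean_space. \<Prod>b\<in>Basis. inverse (1 + (\<beta> \<bullet> b)^2))"
proof (rule integrableI_nonneg)
  show "(\<lambda>\<beta>::'a. \<Prod>b\<in>Basis. inverse (1 + (\<beta> \<bullet> b)^2)) \<in> borel_measurable lborel"
    by measurable
  show "AE x in lborel. 0 \<le> (\<Prod>b\<in>Basis. inverse (1 + (x \<bullet> b)^2))"
    by (auto intro!: prod_nonneg)
  have eq: "(\<integral>\<^sup>+x. ennreal (inverse (1 + x^2)) \<partial>lborel) = ennreal (LBINT x. inverse (1 + x^2))"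
    by (rule nn_integral_eq_integral[OF integrable_cauchy]) auto
  have "(\<integral>\<^sup>+\<beta>. ennreal (\<Prod>b\<in>Basis. inverse (1 + (\<beta> \<bullet> b)^2)) \<partial>(lborel::'a measure))
      = (\<integral>\<^sup>+\<beta>. (\<Prod>b\<in>Basis. ennreal (inverse (1 + (\<beta> \<bullet> b)^2))) \<partial>(lborel::'a measure))"
    by (subst prod_ennreal) auto
  also have "\<dots> = (\<Prod>b\<in>(Basis::'a set). (\<integral>\<^sup>+x. ennreal (inverse (1 + x^2)) \<partial>lborel))"
    by (rule nn_integral_lborel_prod) auto
  also have "\<dots> = (\<Prod>b\<in>(Basis::'a set). ennreal (LBINT x. inverse (1 + x^2)))"
    by (simp add: eq)
  also have "\<dots> < \<infinity>"
    by (subst prod_ennreal) (auto intro!: Bochner_Integration.integral_nonneg)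
  finally show "(\<integral>\<^sup>+\<beta>. ennreal (\<Prod>b\<in>Basis. inverse (1 + (\<beta> \<bullet> b)^2)) \<partial>(lborel::'a measure)) < \<infinity>" .
qed

lemma prod_cauchy_le:
  fixes \<beta> :: "'a::euclidean_space"
  shows "(\<Prod>b\<in>Basis. 1 + (\<beta> \<bullet> b)^2) \<le> (1 + norm \<beta> ^ 2) ^ DIM('a)"
proof -
  have "(\<Prod>b\<in>Basis. 1 + (\<beta> \<bullet> b)^2) \<le> (\<Prod>b\<in>(Basis::'a set). 1 + norm \<beta> ^ 2)"
  proof (rule prod_mono)
    fix b :: 'a assume "b \<in> Basis"
    then have "\<bar>\<beta> \<bullet> b\<bar> \<le> norm \<beta>" by (rule Basis_le_norm)
    then have "(\<beta> \<bullet> b)^2 \<le> norm \<beta> ^ 2"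
      by (metis abs_ge_zero power2_abs power_mono)
    then show "0 \<le> 1 + (\<beta> \<bullet> b)^2 \<and> 1 + (\<beta> \<bullet> b)^2 \<le> 1 + norm \<beta> ^ 2" by simp
  qed
  then show ?thesis by simp
qed

definition Tm :: "real \<Rightarrow> real \<Rightarrow> real" where
  "Tm y t = Phi t ^ nat \<lfloor>y\<rfloor> * (1 - Phi t) ^ nat \<lfloor>1 - y\<rfloor>"

lemma Tm_01: assumes "y \<in> {0,1}" shows "0 \<le> Tm y t" "Tm y t \<le> 1"
  using assms Phi_nonneg[of t] Phi_le1[of t] by (auto simp: Tm_def)

definition Cm :: "nat \<Rightarrow> real" where "Cm m = 2^m * (1 + Kmom m)"

lemma min_bound:
  fixes T t :: real
  assumes "0 \<le> T" "T \<le> 1" "t \<noteq> 0 \<Longrightarrow> T \<le> Kmom m / t^(2*m)"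
  shows "T \<le> Cm m / (1 + t^2)^m"
proof (cases "t^2 \<ge> 1")
  case True
  then have t0: "t \<noteq> 0" by auto
  have tp: "0 < t^(2*m)" using t0 by (simp add: power_mult)
  have "(1 + t^2)^m \<le> (2 * t^2)^m" using True by (intro power_mono) auto
  also have "\<dots> = 2^m * t^(2*m)" by (simp add: power_mult power_mult_distrib)
  finally have le: "(1 + t^2)^m \<le> 2^m * t^(2*m)" .
  have "T \<le> Kmom m / t^(2*m)" using assms(3)[OF t0] .
  also have "\<dots> \<le> (1 + Kmom m) / t^(2*m)" using tp by (intro divide_right_mono) auto
  also have "\<dots> = Cm m / (2^m * t^(2*m))" unfolding Cm_def by simp
  also have "\<dots> \<le> Cm m / (1 + t^2)^m"
    using le tp Kmom_nonneg[of m] unfolding Cm_def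
    by (intro divide_left_mono mult_pos_pos) (auto simp: add_pos_nonneg)
  finally show ?thesis .
next
  case False
  have "(1 + t^2)^m \<le> 2^m" using False by (intro power_mono) auto
  moreover have "0 < (1 + t^2)^m" by (simp add: add_pos_nonneg)
  ultimately have "1 + Kmom m \<le> Cm m / (1 + t^2)^m"
  proof -
    assume a: "(1 + t^2)^m \<le> 2^m" "0 < (1 + t^2)^m"
    have "(1 + Kmom m) * (1 + t^2)^m \<le> (1 + Kmom m) * 2^m"
      using a Kmom_nonneg[of m] by (intro mult_left_mono) auto
    then show ?thesis using a unfolding Cm_def by (simp add: field_simps)
  qed
  then show ?thesis using assms(2) Kmom_nonneg[of m] by linarith
qed

lemma Tm_bound:
  assumes y: "y \<in> {0,1}" and s: "(2*y - 1) * t \<le> 0"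
  shows "Tm y t \<le> Cm m / (1 + t^2)^m"
proof (rule min_bound[OF Tm_01[OF y]])
  assume t0: "t \<noteq> 0"
  show "Tm y t \<le> Kmom m / t ^ (2 * m)"
  proof (cases "y = 1")
    case True
    then have "t < 0" using s t0 by (auto simp: mult_le_0_iff)
    then have "Phi t \<le> Kmom m / t ^ (2 * m)" unfolding Phi_def
      by (intro tail_bound t0) auto
    then show ?thesis using True by (simp add: Tm_def)
  next
    case False
    then have y0: "y = 0" using y by auto
    then have "t > 0" using s t0 by (auto simp: mult_le_0_iff)
    then have "1 - Phi t \<le> Kmom m / t ^ (2 * m)" unfolding one_minus_Phi
      by (intro tail_bound t0) auto
    then show ?thesis using y0 by (simp add: Tm_def)
  qed
qed

lemma mvmult_meas[measurable]: "(\<lambda>z. (A::real^'n^'m) *v z) \<in> borel_measurable borel"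
  by (intro borel_measurable_continuous_onI matrix_vector_mult_linear_continuous_on)

lemma quad_nonneg: assumes "pos_def Q \<or> Q = 0" shows "0 \<le> z \<bullet> (Q *v z)"
proof (cases "Q = 0")
  case True then show ?thesis by simp
next
  case False
  then have "pos_def Q" using assms by simp
  then show ?thesis unfolding pos_def_def
    by (cases "z = 0") (auto intro: less_imp_le)
qed

lemma prod_le_member:
  fixes f :: "nat \<Rightarrow> real"
  assumes "finite A" "i \<in> A" "\<And>j. j \<in> A \<Longrightarrow> 0 \<le> f j \<and> f j \<le> 1"
  shows "prod f A \<le> f i"
proof -
  have "prod f A = f i * prod f (A - {i})" using assms by (simp add: prod.remove)
  also have "\<dots> \<le> f i * 1"
    using assms by (intro mult_left_mono prod_le_1) auto
  finally show ?thesis by simp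
qed

lemma dens_eq: "posterior_dens x y v Q n \<beta> =
   (\<Prod>i<n. Tm (y i) (x i \<bullet> \<beta>)) * exp (- (1/2) * ((\<beta> - v) \<bullet> (Q *v (\<beta> - v))))"
  unfolding posterior_dens_def Tm_def ..

lemma proper_det:
  fixes x :: "nat \<Rightarrow> real^'p" and y :: "nat \<Rightarrow> real"
  assumes y01: "\<And>i. y i \<in> {0,1}" and Q: "pos_def Q \<or> Q = 0" and c: "c > 0"
    and cov: "\<And>\<beta>. \<exists>i<n. (2 * y i - 1) * (x i \<bullet> \<beta>) \<le> - c * norm \<beta>"
  shows "posterior_proper x y v Q n"
proof -
  define m where "m = DIM(real^'p)"
  define c' where "c' = min 1 (c^2)"
  have c'p: "0 < c'" using c by (simp add: c'_def)
  define K where "K = Cm m / c'^m"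
  show ?thesis unfolding posterior_proper_def
  proof (rule Bochner_Integration.integrable_bound[where f="\<lambda>\<beta>::real^'p. K * (\<Prod>b\<in>Basis. inverse (1 + (\<beta> \<bullet> b)^2))"])
    show "integrable lborel (\<lambda>\<beta>::real^'p. K * (\<Prod>b\<in>Basis. inverse (1 + (\<beta> \<bullet> b)^2)))"
      by (intro integrable_mult_right integrable_prod_cauchy)
    show "posterior_dens x y v Q n \<in> borel_measurable lborel"
      unfolding posterior_dens_def by measurable
    show "AE \<beta> in lborel. norm (posterior_dens x y v Q n \<beta>) \<le> norm (K * (\<Prod>b\<in>Basis. inverse (1 + (\<beta> \<bullet> b)^2)))"
    proof (intro AE_I2)
      fix \<beta> :: "real^'p"
      obtain i where i: "i < n" and si: "(2 * y i - 1) * (x i \<bullet> \<beta>) \<le> - c * norm \<beta>"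
        using cov by blast
      define t where "t = x i \<bullet> \<beta>"
      define E where "E = exp (- (1/2) * ((\<beta> - v) \<bullet> (Q *v (\<beta> - v))))"
      have E: "0 \<le> E" "E \<le> 1" using quad_nonneg[OF Q, of "\<beta> - v"] by (auto simp: E_def)
      have P01: "0 \<le> (\<Prod>j<n. Tm (y j) (x j \<bullet> \<beta>))"
        using Tm_01 y01 by (intro prod_nonneg) auto
      have Pi: "(\<Prod>j<n. Tm (y j) (x j \<bullet> \<beta>)) \<le> Tm (y i) t"
        unfolding t_def using i Tm_01 y01 by (intro prod_le_member) auto
      have "0 \<le> c * norm \<beta>" using c by simp
      then have s0: "(2 * y i - 1) * t \<le> 0" using si unfolding t_def by linarith
      have Tb: "Tm (y i) t \<le> Cm m / (1 + t^2)^m" by (rule Tm_bound[OF y01 s0])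
      have abs_s: "\<bar>2 * y i - 1\<bar> = 1" using y01[of i] by auto
      have "c * norm \<beta> \<le> \<bar>t\<bar>"
      proof -
        have "c * norm \<beta> \<le> \<bar>(2 * y i - 1) * t\<bar>" using si t_def by simp
        then show ?thesis by (simp add: abs_mult abs_s)
      qed
      then have "(c * norm \<beta>)^2 \<le> t^2"
        by (metis c mult_nonneg_nonneg norm_ge_zero less_imp_le power2_abs power_mono)
      then have t2: "c^2 * norm \<beta> ^ 2 \<le> t^2" by (simp add: power_mult_distrib)
      have "c' * (1 + norm \<beta> ^ 2) \<le> 1 + t^2"
      proof -
        have "c' * norm \<beta> ^ 2 \<le> c^2 * norm \<beta> ^ 2" unfolding c'_def
          by (intro mult_right_mono) auto
        moreover have "c' \<le> 1" unfolding c'_def by simp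
        ultimately show ?thesis using t2 by (simp add: algebra_simps)
      qed
      then have "(c' * (1 + norm \<beta> ^ 2))^m \<le> (1 + t^2)^m"
        using c'p by (intro power_mono) (auto intro: add_pos_nonneg)
      moreover have "c'^m * (\<Prod>b\<in>Basis. 1 + (\<beta> \<bullet> b)^2) \<le> (c' * (1 + norm \<beta> ^ 2))^m"
        unfolding power_mult_distrib m_def using c'p
        by (intro mult_left_mono prod_cauchy_le) auto
      ultimately have le2: "c'^m * (\<Prod>b\<in>Basis. 1 + (\<beta> \<bullet> b)^2) \<le> (1 + t^2)^m" by linarith
      have pp: "0 < (\<Prod>b\<in>(Basis::(real^'p) set). 1 + (\<beta> \<bullet> b)^2)"
        by (intro prod_pos) (auto intro: add_pos_nonneg)
      have Cmp: "0 \<le> Cm m" unfolding Cm_def using Kmom_nonneg[of m] by simp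
      have "Cm m / (1 + t^2)^m \<le> Cm m / (c'^m * (\<Prod>b\<in>Basis. 1 + (\<beta> \<bullet> b)^2))"
        using le2 pp c'p Cmp add_pos_nonneg[OF zero_less_one zero_le_power2[of t]]
        by (intro divide_left_mono mult_pos_pos) auto
      also have "\<dots> = K * inverse (\<Prod>b\<in>Basis. 1 + (\<beta> \<bullet> b)^2)"
        unfolding K_def by (simp add: divide_inverse inverse_mult_distrib mult_ac)
      also have "\<dots> = K * (\<Prod>b\<in>Basis. inverse (1 + (\<beta> \<bullet> b)^2))"
        using prod_inversef[of "\<lambda>b. 1 + (\<beta> \<bullet> b)^2" "Basis::(real^'p) set"] by (simp add: comp_def)
      finally have main: "Tm (y i) t \<le> K * (\<Prod>b\<in>Basis. inverse (1 + (\<beta> \<bullet> b)^2))"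
        using Tb by linarith
      have Kp: "0 \<le> K * (\<Prod>b\<in>Basis. inverse (1 + (\<beta> \<bullet> b)^2))"
        unfolding K_def using Cmp c'p by (intro mult_nonneg_nonneg prod_nonneg) auto
      have "posterior_dens x y v Q n \<beta> = (\<Prod>j<n. Tm (y j) (x j \<bullet> \<beta>)) * E"
        unfolding dens_eq E_def ..
      moreover have "(\<Prod>j<n. Tm (y j) (x j \<bullet> \<beta>)) * E \<le> (\<Prod>j<n. Tm (y j) (x j \<bullet> \<beta>)) * 1"
        using E P01 by (intro mult_left_mono) auto
      moreover have "0 \<le> (\<Prod>j<n. Tm (y j) (x j \<bullet> \<beta>)) * E" using E P01 by simp
      ultimately show "norm (posterior_dens x y v Q n \<beta>) \<le> norm (K * (\<Prod>b\<in>Basis. inverse (1 + (\<beta> \<bullet> b)^2)))"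
        using Pi main Kp by simp
    qed
  qed
qed

lemma (in prob_space) AE_exists_event:
  fixes Z :: "nat \<Rightarrow> 'a \<Rightarrow> 'b"
  assumes indep: "indep_vars (\<lambda>_. N) Z UNIV"
    and meas: "\<And>i. Z i \<in> measurable M N"
    and ident: "\<And>i. distr M N (Z i) = distr M N (Z 0)"
    and B: "B \<in> sets N"
    and pos: "prob {\<omega> \<in> space M. Z 0 \<omega> \<in> B} > 0"
  shows "AE \<omega> in M. \<exists>i. Z i \<omega> \<in> B"
proof -
  define q where "q = prob {\<omega> \<in> space M. Z 0 \<omega> \<in> B}"
  define C where "C i = {\<omega> \<in> space M. Z i \<omega> \<notin> B}" for i
  have Cev: "C i \<in> events" for i unfolding C_def using meas[of i] B by measurable
  have pZ: "prob {\<omega> \<in> space M. Z i \<omega> \<in> B} = q" for i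
  proof -
    have "prob {\<omega> \<in> space M. Z i \<omega> \<in> B} = measure (distr M N (Z i)) B"
      using meas[of i] B by (subst measure_distr) (auto simp: vimage_def Int_def conj_commute)
    also have "\<dots> = measure (distr M N (Z 0)) B" by (simp add: ident[of i])
    also have "\<dots> = q" unfolding q_def
      using meas[of 0] B by (subst measure_distr) (auto simp: vimage_def Int_def conj_commute)
    finally show ?thesis .
  qed
  have pC: "prob (C i) = 1 - q" for i
  proof -
    have "C i = space M - {\<omega> \<in> space M. Z i \<omega> \<in> B}" unfolding C_def by auto
    then have "prob (C i) = 1 - prob {\<omega> \<in> space M. Z i \<omega> \<in> B}"
      using meas[of i] B by (simp add: prob_compl)
    then show ?thesis using pZ by simp
  qed
  have ie: "indep_events C UNIV" unfolding C_def
    by (rule indep_eventsI_indep_vars[OF indep]) (use B sets.sets_into_space in \<open>auto\<close>)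
  define Cinf where "Cinf = (\<Inter>i. C i)"
  have Cinf_ev: "Cinf \<in> events" unfolding Cinf_def using Cev by auto
  have bnd: "prob Cinf \<le> (1 - q) ^ Suc n" for n
  proof -
    have "prob Cinf \<le> prob (\<Inter>i\<in>{..n}. C i)"
      unfolding Cinf_def using Cev by (intro finite_measure_mono) auto
    also have "\<dots> = (\<Prod>i\<in>{..n}. prob (C i))"
      using ie unfolding indep_events_def by (auto)
    also have "\<dots> = (1 - q) ^ Suc n" by (simp add: pC)
    finally show ?thesis .
  qed
  have q1: "q \<le> 1" unfolding q_def by simp
  have lim: "(\<lambda>n. (1 - q) ^ Suc n) \<longlonglongrightarrow> 0"
    using pos q1 unfolding q_def[symmetric]
    by (intro LIMSEQ_Suc LIMSEQ_power_zero) auto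
  have "prob Cinf \<le> 0" using bnd by (intro LIMSEQ_le_const[OF lim]) auto
  then have "prob Cinf = 0" using measure_nonneg[of M Cinf] by linarith
  then have "Cinf \<in> null_sets M" using Cinf_ev by (simp add: emeasure_eq_measure null_sets_def)
  then show ?thesis
    by (rule AE_I') (auto simp: Cinf_def C_def)
qed

lemma (in prob_space) prob_pos_from_integral:
  fixes X :: "'a \<Rightarrow> 'b::topological_space" and H :: "'b \<Rightarrow> real"
  assumes X: "X \<in> borel_measurable M" and H: "H \<in> borel_measurable borel"
    and Hpos: "\<And>x. 0 < H x" and Hle: "\<And>x. H x \<le> 1"
    and B: "B \<in> sets borel" and pB: "prob {\<omega> \<in> space M. X \<omega> \<in> B} > 0"
  shows "(\<integral>\<omega>. indicator B (X \<omega>) * H (X \<omega>) \<partial>M) > 0"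
proof -
  have int: "integrable M (\<lambda>\<omega>. indicator B (X \<omega>) * H (X \<omega>))"
    by (rule integrable_const_bound[where B=1]) (use X H B Hpos Hle in \<open>auto simp: indicator_def abs_le_iff less_imp_le\<close>)
  have nn: "AE \<omega> in M. 0 \<le> indicator B (X \<omega>) * H (X \<omega>)"
    using Hpos by (intro AE_I2 mult_nonneg_nonneg) (auto intro: less_imp_le)
  have ge: "0 \<le> (\<integral>\<omega>. indicator B (X \<omega>) * H (X \<omega>) \<partial>M)"
    using Hpos by (intro Bochner_Integration.integral_nonneg mult_nonneg_nonneg) (auto intro: less_imp_le)
  show ?thesis
  proof (rule ccontr)
    assume "\<not> ?thesis"
    then have "(\<integral>\<omega>. indicator B (X \<omega>) * H (X \<omega>) \<partial>M) = 0" using ge by linarith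
    then have "AE \<omega> in M. indicator B (X \<omega>) * H (X \<omega>) = 0"
      using integral_nonneg_eq_0_iff_AE[OF int nn] by simp
    then have "AE \<omega> in M. \<not> X \<omega> \<in> B"
      by eventually_elim (use Hpos in \<open>auto simp: indicator_def less_le\<close>)
    then have "prob {\<omega> \<in> space M. X \<omega> \<in> B} = 0" by (rule prob_eq_0_AE)
    then show False using pB by simp
  qed
qed

lemma (in prob_space) prob_as_integral:
  assumes X: "X \<in> borel_measurable M" and B: "B \<in> sets borel"
  shows "prob {\<omega> \<in> space M. X \<omega> \<in> B} = (\<integral>\<omega>. indicator B (X \<omega>) \<partial>M)"
proof -
  have S: "{\<omega> \<in> space M. X \<omega> \<in> B} \<in> events" using X B by measurable
  have "(\<integral>\<omega>. indicator B (X \<omega>) \<partial>M) = (\<integral>\<omega>. indicator {\<omega> \<in> space M. X \<omega> \<in> B} \<omega> \<partial>M)"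
    by (rule Bochner_Integration.integral_cong) (auto simp: indicator_def)
  also have "\<dots> = prob {\<omega> \<in> space M. X \<omega> \<in> B}" using S by simp
  finally show ?thesis by simp
qed

lemma (in prob_space) neg_event_pos:
  fixes X :: "'a \<Rightarrow> real^'p" and Y :: "'a \<Rightarrow> real"
  assumes X[measurable]: "X \<in> borel_measurable M" and Y[measurable]: "Y \<in> borel_measurable M"
    and Y01: "\<And>\<omega>. \<omega> \<in> space M \<Longrightarrow> Y \<omega> \<in> {0, 1}"
    and G[measurable]: "G \<in> borel_measurable borel" and G_range: "\<And>x. 0 < G x \<and> G x < 1"
    and cond: "\<And>B. B \<in> sets borel \<Longrightarrow>
        measure M {\<omega> \<in> space M. X \<omega> \<in> B \<and> Y \<omega> = 1}
        = (\<integral>\<omega>. indicator B (X \<omega>) * G (X \<omega>) \<partial>M)"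
    and pne: "prob {\<omega> \<in> space M. X \<omega> \<bullet> u \<noteq> 0} > 0"
  shows "prob {\<omega> \<in> space M. (2 * Y \<omega> - 1) * (X \<omega> \<bullet> u) < 0} > 0"
proof -
  define D where "D = {\<omega> \<in> space M. (2 * Y \<omega> - 1) * (X \<omega> \<bullet> u) < 0}"
  have Dev: "D \<in> events" unfolding D_def by measurable
  have Bl: "{x::real^'p. x \<bullet> u < 0} \<in> sets borel"
    by (rule borel_open) (use open_halfspace_lt[of u 0] in \<open>simp add: inner_commute\<close>)
  have Bg: "{x::real^'p. x \<bullet> u > 0} \<in> sets borel"
    by (rule borel_open) (use open_halfspace_gt[of 0 u] in \<open>simp add: inner_commute\<close>)
  have El: "{\<omega> \<in> space M. X \<omega> \<in> {x. x \<bullet> u < 0}} \<in> events" using X Bl by measurable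
  have Eg: "{\<omega> \<in> space M. X \<omega> \<in> {x. x \<bullet> u > 0}} \<in> events" using X Bg by measurable
  have "{\<omega> \<in> space M. X \<omega> \<bullet> u \<noteq> 0} = {\<omega> \<in> space M. X \<omega> \<in> {x. x \<bullet> u < 0}} \<union> {\<omega> \<in> space M. X \<omega> \<in> {x. x \<bullet> u > 0}}"
    by auto
  moreover have "prob ({\<omega> \<in> space M. X \<omega> \<in> {x. x \<bullet> u < 0}} \<union> {\<omega> \<in> space M. X \<omega> \<in> {x. x \<bullet> u > 0}}) \<le> prob {\<omega> \<in> space M. X \<omega> \<in> {x. x \<bullet> u < 0}} + prob {\<omega> \<in> space M. X \<omega> \<in> {x. x \<bullet> u > 0}}"
    by (rule measure_Un_le[OF El Eg])
  ultimately have "prob {\<omega> \<in> space M. X \<omega> \<bullet> u \<noteq> 0} \<le> prob {\<omega> \<in> space M. X \<omega> \<in> {x. x \<bullet> u < 0}} + prob {\<omega> \<in> space M. X \<omega> \<in> {x. x \<bullet> u > 0}}"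
    by simp
  then consider "prob {\<omega> \<in> space M. X \<omega> \<in> {x. x \<bullet> u < 0}} > 0" | "prob {\<omega> \<in> space M. X \<omega> \<in> {x. x \<bullet> u > 0}} > 0"
    using pne measure_nonneg[of M "{\<omega> \<in> space M. X \<omega> \<in> {x. x \<bullet> u < 0}}"]
      measure_nonneg[of M "{\<omega> \<in> space M. X \<omega> \<in> {x. x \<bullet> u > 0}}"] by linarith
  then show ?thesis
  proof cases
    case 1
    define B where "B = {x::real^'p. x \<bullet> u < 0}"
    have Bb: "B \<in> sets borel" unfolding B_def using Bl Bg by simp
    have "0 < (\<integral>\<omega>. indicator B (X \<omega>) * G (X \<omega>) \<partial>M)"
      using G_range 1 unfolding B_def
      by (intro prob_pos_from_integral) (auto simp: less_imp_le)
    also have "\<dots> = prob {\<omega> \<in> space M. X \<omega> \<in> B \<and> Y \<omega> = 1}" using cond[OF Bb] by simp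
    also have "\<dots> \<le> prob D" unfolding D_def B_def using Dev
      by (intro finite_measure_mono) (auto simp: D_def)
    finally show ?thesis unfolding D_def .
  next
    case 2
    define B where "B = {x::real^'p. x \<bullet> u > 0}"
    have Bb: "B \<in> sets borel" unfolding B_def using Bl Bg by simp
    have E1: "{\<omega> \<in> space M. X \<omega> \<in> B \<and> Y \<omega> = 1} \<in> events" using Bb by measurable
    have E0: "{\<omega> \<in> space M. X \<omega> \<in> B \<and> Y \<omega> = 0} \<in> events" using Bb by measurable
    have split: "{\<omega> \<in> space M. X \<omega> \<in> B} = {\<omega> \<in> space M. X \<omega> \<in> B \<and> Y \<omega> = 1} \<union> {\<omega> \<in> space M. X \<omega> \<in> B \<and> Y \<omega> = 0}"
      using Y01 by auto
    have padd: "prob {\<omega> \<in> space M. X \<omega> \<in> B} = prob {\<omega> \<in> space M. X \<omega> \<in> B \<and> Y \<omega> = 1} + prob {\<omega> \<in> space M. X \<omega> \<in> B \<and> Y \<omega> = 0}"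
      unfolding split by (rule finite_measure_Union[OF E1 E0]) auto
    have int1: "integrable M (\<lambda>\<omega>. indicator B (X \<omega>) :: real)"
      by (rule integrable_const_bound[where B=1]) (use Bb in \<open>auto simp: indicator_def\<close>)
    have int2: "integrable M (\<lambda>\<omega>. indicator B (X \<omega>) * G (X \<omega>))"
      by (rule integrable_const_bound[where B=1]) (use Bb G_range in \<open>auto simp: indicator_def abs_le_iff less_imp_le\<close>)
    have pos: "0 < (\<integral>\<omega>. indicator B (X \<omega>) * (1 - G (X \<omega>)) \<partial>M)"
      using G_range 2 unfolding B_def
      by (intro prob_pos_from_integral) (auto simp: less_imp_le)
    also have "(\<integral>\<omega>. indicator B (X \<omega>) * (1 - G (X \<omega>)) \<partial>M)
       = (\<integral>\<omega>. indicator B (X \<omega>) \<partial>M) - (\<integral>\<omega>. indicator B (X \<omega>) * G (X \<omega>) \<partial>M)"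
      by (subst Bochner_Integration.integral_diff[OF int1 int2, symmetric]) (simp add: algebra_simps)
    also have "\<dots> = prob {\<omega> \<in> space M. X \<omega> \<in> B \<and> Y \<omega> = 0}"
      using padd prob_as_integral[OF X Bb] cond[OF Bb] by simp
    also have "\<dots> \<le> prob D" unfolding D_def B_def using Dev
      by (intro finite_measure_mono) (auto simp: D_def)
    finally show ?thesis unfolding D_def .
  qed
qed

lemma (in prob_space) pos_box:
  fixes X :: "'a \<Rightarrow> real^'p" and Y :: "'a \<Rightarrow> real"
  assumes X[measurable]: "X \<in> borel_measurable M" and Y[measurable]: "Y \<in> borel_measurable M"
    and p: "prob {\<omega> \<in> space M. (2 * Y \<omega> - 1) * (X \<omega> \<bullet> u) < 0} > 0"
  shows "\<exists>m. prob {\<omega> \<in> space M. (2 * Y \<omega> - 1) * (X \<omega> \<bullet> u) < - 1 / real (Suc m) \<and> norm (X \<omega>) \<le> real (Suc m)} > 0"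
proof (rule ccontr)
  define A where "A m = {\<omega> \<in> space M. (2 * Y \<omega> - 1) * (X \<omega> \<bullet> u) < - 1 / real (Suc m) \<and> norm (X \<omega>) \<le> real (Suc m)}" for m
  assume "\<not> ?thesis"
  then have z: "prob (A m) = 0" for m
    using measure_nonneg[of M "A m"] unfolding A_def by (meson not_less order.antisym)
  have Aev: "A m \<in> events" for m unfolding A_def by measurable
  have null: "A m \<in> null_sets M" for m using z[of m] Aev[of m]
    by (simp add: emeasure_eq_measure null_sets_def)
  have "(\<Union>m. A m) \<in> null_sets M" using null by blast
  moreover have "{\<omega> \<in> space M. (2 * Y \<omega> - 1) * (X \<omega> \<bullet> u) < 0} \<subseteq> (\<Union>m. A m)"
  proof
    fix \<omega> assume w: "\<omega> \<in> {\<omega> \<in> space M. (2 * Y \<omega> - 1) * (X \<omega> \<bullet> u) < 0}"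
    define a where "a = - ((2 * Y \<omega> - 1) * (X \<omega> \<bullet> u))"
    have a: "0 < a" using w by (simp add: a_def)
    obtain m1 :: nat where m1: "inverse a < real m1" using reals_Archimedean2 by blast
    obtain m2 :: nat where m2: "norm (X \<omega>) < real m2" using reals_Archimedean2 by blast
    define m where "m = m1 + m2"
    have "1 / real (Suc m) < a"
    proof -
      have "inverse a < real (Suc m)" using m1 unfolding m_def by simp
      then have "inverse (real (Suc m)) < inverse (inverse a)"
        using a by (intro less_imp_inverse_less) auto
      then show ?thesis using a by (simp add: inverse_eq_divide)
    qed
    moreover have "norm (X \<omega>) \<le> real (Suc m)" using m2 unfolding m_def by simp
    ultimately have "\<omega> \<in> A m" using w unfolding A_def a_def by auto
    then show "\<omega> \<in> (\<Union>m. A m)" by blast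
  qed
  moreover have "{\<omega> \<in> space M. (2 * Y \<omega> - 1) * (X \<omega> \<bullet> u) < 0} \<in> events" by measurable
  ultimately have "{\<omega> \<in> space M. (2 * Y \<omega> - 1) * (X \<omega> \<bullet> u) < 0} \<in> null_sets M"
    by (blast intro: null_sets_subset)
  then have "prob {\<omega> \<in> space M. (2 * Y \<omega> - 1) * (X \<omega> \<bullet> u) < 0} = 0"
    by (simp add: emeasure_eq_measure null_sets_def)
  then show False using p by simp
qed

lemma approx_step:
  fixes x w u :: "real^'p" and s k K :: real
  assumes s: "\<bar>s\<bar> = 1" and su: "s * (x \<bullet> u) < - 1 / k" and nx: "norm x \<le> k"
    and d: "dist w u < 1 / (2 * k^2)" and k: "1 \<le> k" and kK: "k \<le> K"
  shows "s * (x \<bullet> w) \<le> - 1 / (2 * K)"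
proof -
  have "\<bar>s * (x \<bullet> (w - u))\<bar> = \<bar>x \<bullet> (w - u)\<bar>" by (simp add: abs_mult s)
  also have "\<dots> \<le> norm x * norm (w - u)" by (rule Cauchy_Schwarz_ineq2)
  also have "\<dots> \<le> k * (1 / (2 * k^2))"
    using nx d k by (intro mult_mono) (auto simp: dist_norm)
  also have "\<dots> = 1 / (2 * k)" using k by (simp add: power2_eq_square)
  finally have b: "\<bar>s * (x \<bullet> (w - u))\<bar> \<le> 1 / (2 * k)" .
  have "s * (x \<bullet> w) = s * (x \<bullet> u) + s * (x \<bullet> (w - u))" by (simp add: inner_diff_right algebra_simps)
  also have "\<dots> < - 1 / k + 1 / (2 * k)" using su b by linarith
  also have "\<dots> = - 1 / (2 * k)" using k by (simp add: field_simps)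
  also have "\<dots> \<le> - 1 / (2 * K)" using k kK by (simp add: field_simps)
  finally show ?thesis by simp
qed

theorem proposition11:
  fixes M :: "'a measure"
    and X :: "nat \<Rightarrow> 'a \<Rightarrow> real^'p"
    and Y :: "nat \<Rightarrow> 'a \<Rightarrow> real"
    and G :: "real^'p \<Rightarrow> real"
    and v :: "real^'p"
    and Q :: "real^'p^'p"
  assumes "prob_space M"
    and Q: "pos_def Q \<or> Q = 0"
    and meas_X: "\<And>i. X i \<in> borel_measurable M"
    and meas_Y: "\<And>i. Y i \<in> borel_measurable M"
    and Y01: "\<And>i \<omega>. \<omega> \<in> space M \<Longrightarrow> Y i \<omega> \<in> {0, 1}"
    and indep: "prob_space.indep_vars M (\<lambda>_. borel) (\<lambda>i \<omega>. (X i \<omega>, Y i \<omega>)) UNIV"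
    and ident: "\<And>i. distr M borel (\<lambda>\<omega>. (X i \<omega>, Y i \<omega>)) = distr M borel (\<lambda>\<omega>. (X 0 \<omega>, Y 0 \<omega>))"
    and G_meas: "G \<in> borel_measurable borel"
    and G_range: "\<And>x. 0 < G x \<and> G x < 1"
    and cond: "\<And>B. B \<in> sets borel \<Longrightarrow>
        measure M {\<omega> \<in> space M. X 0 \<omega> \<in> B \<and> Y 0 \<omega> = 1}
        = (\<integral>\<omega>. indicator B (X 0 \<omega>) * G (X 0 \<omega>) \<partial>M)"
    and A2_int: "\<And>j k. integrable M (\<lambda>\<omega>. X 0 \<omega> $ j * X 0 \<omega> $ k)"
    and A2_pd: "pos_def (\<chi> j k. \<integral>\<omega>. X 0 \<omega> $ j * X 0 \<omega> $ k \<partial>M)"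
    and A3: "\<And>s \<beta>. sign_vector s \<Longrightarrow> \<beta> \<noteq> 0 \<Longrightarrow>
        measure M {\<omega> \<in> space M.
          (indicator (open_orthant s) (X 0 \<omega>) + indicator (open_orthant s) (- X 0 \<omega>))
            * (X 0 \<omega> \<bullet> \<beta>) \<noteq> (0::real)} > 0"
  shows "AE \<omega> in M. \<exists>N. \<forall>n\<ge>N.
           posterior_proper (\<lambda>i. X i \<omega>) (\<lambda>i. Y i \<omega>) v Q n"
proof -
  interpret prob_space M by fact
  define Z where "Z i \<omega> = (X i \<omega>, Y i \<omega>)" for i \<omega>
  note [measurable] = meas_X meas_Y G_meas
  have Zm: "Z i \<in> borel_measurable M" for i unfolding Z_def by measurable
  define Bs where "Bs u m = {z::((real^'p) \<times> real).
      (2 * snd z - 1) * (fst z \<bullet> u) < - 1 / real (Suc m)} \<inter> {z. norm (fst z) \<le> real (Suc m)}" for u m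
  have Bs_sets: "Bs u m \<in> sets borel" for u m
  proof -
    have "{z::((real^'p) \<times> real). (2 * snd z - 1) * (fst z \<bullet> u) < - 1 / real (Suc m)} \<in> sets borel"
      by (intro borel_open open_Collect_less continuous_intros)
    moreover have "{z::((real^'p) \<times> real). norm (fst z) \<le> real (Suc m)} \<in> sets borel"
      by (intro borel_closed closed_Collect_le continuous_intros)
    ultimately show ?thesis unfolding Bs_def by blast
  qed
  have ev_eq: "{\<omega> \<in> space M. Z 0 \<omega> \<in> Bs u m} = {\<omega> \<in> space M. (2 * Y 0 \<omega> - 1) * (X 0 \<omega> \<bullet> u) < - 1 / real (Suc m) \<and> norm (X 0 \<omega>) \<le> real (Suc m)}" for u m
    by (auto simp: Z_def Bs_def)
  have exm: "\<exists>m. prob {\<omega> \<in> space M. Z 0 \<omega> \<in> Bs u m} > 0" if u: "u \<in> sphere 0 1" for u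
  proof -
    define s :: "real^'p" where "s = (\<chi> k. 1)"
    have sv: "sign_vector s" by (simp add: s_def sign_vector_def)
    have u0: "u \<noteq> 0" using u by auto
    have sub: "{\<omega> \<in> space M. (indicator (open_orthant s) (X 0 \<omega>) + indicator (open_orthant s) (- X 0 \<omega>))
            * (X 0 \<omega> \<bullet> u) \<noteq> (0::real)} \<subseteq> {\<omega> \<in> space M. X 0 \<omega> \<bullet> u \<noteq> 0}" by auto
    have "0 < measure M {\<omega> \<in> space M. (indicator (open_orthant s) (X 0 \<omega>) + indicator (open_orthant s) (- X 0 \<omega>))
            * (X 0 \<omega> \<bullet> u) \<noteq> (0::real)}" by (rule A3[OF sv u0])
    also have "\<dots> \<le> prob {\<omega> \<in> space M. X 0 \<omega> \<bullet> u \<noteq> 0}"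
      by (rule finite_measure_mono[OF sub]) measurable
    finally have pne: "prob {\<omega> \<in> space M. X 0 \<omega> \<bullet> u \<noteq> 0} > 0" .
    have "prob {\<omega> \<in> space M. (2 * Y 0 \<omega> - 1) * (X 0 \<omega> \<bullet> u) < 0} > 0"
      by (rule neg_event_pos[OF meas_X meas_Y Y01 G_meas G_range cond pne]) auto
    from pos_box[OF meas_X meas_Y this] show ?thesis by (simp add: ev_eq)
  qed
  define I where "I = {(u, m). u \<in> sphere (0::(real^'p)) 1 \<and> prob {\<omega> \<in> space M. Z 0 \<omega> \<in> Bs u m} > 0}"
  define f where "f p = ball (fst p) (1 / (2 * (real (Suc (snd p)))^2))" for p :: "(real^'p) \<times> nat"
  have cover: "sphere (0::(real^'p)) 1 \<subseteq> (\<Union>p\<in>I. f p)"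
  proof
    fix w :: "real^'p" assume w: "w \<in> sphere 0 1"
    obtain m where "prob {\<omega> \<in> space M. Z 0 \<omega> \<in> Bs w m} > 0" using exm[OF w] by blast
    then have "(w, m) \<in> I" using w by (simp add: I_def)
    moreover have "w \<in> f (w, m)" by (simp add: f_def)
    ultimately show "w \<in> (\<Union>p\<in>I. f p)" by blast
  qed
  obtain I' where I'I: "I' \<subseteq> I" and finI': "finite I'" and cov': "sphere (0::(real^'p)) 1 \<subseteq> (\<Union>p\<in>I'. f p)"
    by (rule compactE_image[OF compact_sphere _ cover]) (simp add: f_def)
  have indep': "indep_vars (\<lambda>_. borel) Z UNIV" using indep unfolding Z_def .
  have identZ: "distr M borel (Z i) = distr M borel (Z 0)" for i unfolding Z_def using ident[of i] .
  have AEall: "AE \<omega> in M. \<forall>p\<in>I'. \<exists>i. Z i \<omega> \<in> Bs (fst p) (snd p)"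
  proof (rule AE_finite_allI[OF finI'])
    fix p assume "p \<in> I'"
    then have "p \<in> I" using I'I by blast
    then have pp: "prob {\<omega> \<in> space M. Z 0 \<omega> \<in> Bs (fst p) (snd p)} > 0" by (auto simp: I_def)
    show "AE \<omega> in M. \<exists>i. Z i \<omega> \<in> Bs (fst p) (snd p)"
      by (rule AE_exists_event[OF indep' Zm identZ Bs_sets pp])
  qed
  show ?thesis
    using AEall AE_space
  proof eventually_elim
    case (elim \<omega>)
    then have \<omega>: "\<omega> \<in> space M" and ex: "\<forall>p\<in>I'. \<exists>i. Z i \<omega> \<in> Bs (fst p) (snd p)" by auto
    from bchoice[OF ex] obtain ii where ii: "\<forall>p\<in>I'. Z (ii p) \<omega> \<in> Bs (fst p) (snd p)" by blast
    define K where "K = Max (insert 1 ((\<lambda>p. real (Suc (snd p))) ` I'))"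
    define Nn where "Nn = Max (insert 1 ((\<lambda>p. Suc (ii p)) ` I'))"
    have K1: "1 \<le> K" unfolding K_def using finI' by simp
    have Kge: "real (Suc (snd p)) \<le> K" if "p \<in> I'" for p unfolding K_def using finI' that by simp
    have N1: "1 \<le> Nn" unfolding Nn_def using finI' by simp
    have Nge: "Suc (ii p) \<le> Nn" if "p \<in> I'" for p unfolding Nn_def using finI' that by simp
    define c where "c = 1 / (2 * K)"
    have c: "c > 0" using K1 by (simp add: c_def)
    have y01: "Y i \<omega> \<in> {0, 1}" for i using Y01 \<omega> .
    have cov: "\<exists>i<Nn. (2 * Y i \<omega> - 1) * (X i \<omega> \<bullet> \<beta>) \<le> - c * norm \<beta>" for \<beta>
    proof (cases "\<beta> = 0")
      case True
      then show ?thesis using N1 by (intro exI[of _ 0]) auto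
    next
      case False
      define w where "w = \<beta> /\<^sub>R norm \<beta>"
      have "w \<in> sphere 0 1" using False by (simp add: w_def)
      then obtain p where p: "p \<in> I'" and wp: "w \<in> f p" using cov' by blast
      define j where "j = ii p"
      have inB: "Z j \<omega> \<in> Bs (fst p) (snd p)" using ii p unfolding j_def by blast
      have s: "\<bar>2 * Y j \<omega> - 1\<bar> = 1" using y01[of j] by auto
      have key: "(2 * Y j \<omega> - 1) * (X j \<omega> \<bullet> w) \<le> - 1 / (2 * K)"
      proof (rule approx_step[OF s])
        show "(2 * Y j \<omega> - 1) * (X j \<omega> \<bullet> fst p) < - 1 / real (Suc (snd p))"
          using inB by (simp add: Bs_def Z_def)
        show "norm (X j \<omega>) \<le> real (Suc (snd p))"
          using inB by (simp add: Bs_def Z_def)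
        show "dist w (fst p) < 1 / (2 * (real (Suc (snd p)))^2)"
          using wp by (simp add: f_def dist_commute)
        show "1 \<le> real (Suc (snd p))" by simp
        show "real (Suc (snd p)) \<le> K" by (rule Kge[OF p])
      qed
      have "X j \<omega> \<bullet> \<beta> = norm \<beta> * (X j \<omega> \<bullet> w)"
        using False by (simp add: w_def)
      then have "(2 * Y j \<omega> - 1) * (X j \<omega> \<bullet> \<beta>) = norm \<beta> * ((2 * Y j \<omega> - 1) * (X j \<omega> \<bullet> w))"
        by simp
      also have "\<dots> \<le> norm \<beta> * (- c)"
        using key unfolding c_def by (intro mult_left_mono) auto
      finally have "(2 * Y j \<omega> - 1) * (X j \<omega> \<bullet> \<beta>) \<le> - c * norm \<beta>" by (simp add: mult.commute)
      moreover have "j < Nn" using Nge[OF p] unfolding j_def by simp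
      ultimately show ?thesis by blast
    qed
    show ?case
    proof (intro exI allI impI)
      fix n assume n: "Nn \<le> n"
      show "posterior_proper (\<lambda>i. X i \<omega>) (\<lambda>i. Y i \<omega>) v Q n"
      proof (rule proper_det[OF _ Q c])
        show "\<And>i. Y i \<omega> \<in> {0, 1}" by (rule y01)
        fix \<beta>
        obtain i where "i < Nn" "(2 * Y i \<omega> - 1) * (X i \<omega> \<bullet> \<beta>) \<le> - c * norm \<beta>" using cov by blast
        then show "\<exists>i<n. (2 * Y i \<omega> - 1) * (X i \<omega> \<bullet> \<beta>) \<le> - c * norm \<beta>" using n
          by (intro exI[of _ i]) auto
      qed
    qed
  qed
qed

end
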